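(* Let $X=[0,1]$ with the usual metric, $U=\{0,1\}$, and let $F_0,F_1:[0,1]\to[0,1]$ be given by $F_0(x)=\frac12$ for $0\le x<\frac14$, $F_0(x)=2(x-\frac12)+1$ for $\frac14\le x<\frac12$, $F_0(x)=1$ for $\frac12\le x\le1$; and $F_1(x)=12(x-\frac14)^2+\frac14$ for $0\le x<\frac14$, $F_1(x)=(x-\frac14)^2+\frac14$ for $\frac14\le x\le1$. Consider the control system $x_{n+1}=F_{u_n}(x_n)$ and let $Q=[0,\frac14]$. Then $Q$ is mean equi-invariant but not finitely equi-invariant in the mean.
   Context: For $\omega=(\omega_0,\omega_1,\dots)\in\mathscr U=U^{\mathbb N_0}$ and $x\in X$: $\phi(0,x,\omega)=x$, $\phi(k,x,\omega)=F_{\omega_{k-1}}\circ\cdots\circ F_{\omega_0}(x)$. $d(y,Q)=\inf_{q\in Q}|y-q|$, $B(x,\delta)$ open ball, $\mathbb N=\{1,2,\dots\}$. A point $x\in Q$ is a mean equi-invariant point of $Q$ if for every $\varepsilon>0$ there exist $\delta>0$ and $\omega\in\mathscr U$ such that $\limsup_{n\to\infty}\frac1n\sum_{i=0}^{n-1}d(\phi(i,y,\omega),Q)<\varepsilon$ for all $y\in B(x,\delta)\cap Q$. It is a finitely equi-invariant point in the mean of $Q$ if for every $\varepsilon>0$ there exist $\delta>0$ and a finite set $F\subset\mathscr U$ such that for every $y\in B(x,\delta)\cap Q$ there is $\omega\in F$ with $\frac1n\sum_{i=0}^{n-1}d(\phi(i,y,\omega),Q)<\varepsilon$ for all $n\in\mathbb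 N$. $Q$ has one of these properties if all its points do. *)

theory Defs
  imports "HOL-Analysis.Analysis" "HOL-Library.Liminf_Limsup"
begin

fun phi :: "('u \<Rightarrow> 'a \<Rightarrow> 'a) \<Rightarrow> nat \<Rightarrow> 'a \<Rightarrow> (nat \<Rightarrow> 'u) \<Rightarrow> 'a" where
  "phi F 0 x \<omega> = x"
| "phi F (Suc k) x \<omega> = F (\<omega> k) (phi F k x \<omega>)"

definition ctrl_seqs :: "'u set \<Rightarrow> (nat \<Rightarrow> 'u) set" where
  "ctrl_seqs U = {\<omega>. \<forall>i. \<omega> i \<in> U}"

definition avg_dist :: "('u \<Rightarrow> 'a::metric_space \<Rightarrow> 'a) \<Rightarrow> 'a set \<Rightarrow> 'a \<Rightarrow> (nat \<Rightarrow> 'u) \<Rightarrow> nat \<Rightarrow> real" where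
  "avg_dist F Q y \<omega> n = (\<Sum>i<n. infdist (phi F i y \<omega>) Q) / real n"

definition mean_equi_invariant_point ::
  "('u \<Rightarrow> 'a::metric_space \<Rightarrow> 'a) \<Rightarrow> 'u set \<Rightarrow> 'a set \<Rightarrow> 'a \<Rightarrow> bool" where
  "mean_equi_invariant_point F U Q x \<longleftrightarrow> x \<in> Q \<and>
     (\<forall>\<epsilon>>0. \<exists>\<delta>>0. \<exists>\<omega>\<in>ctrl_seqs U. \<forall>y\<in>ball x \<delta> \<inter> Q.
        limsup (\<lambda>n. ereal (avg_dist F Q y \<omega> n)) < ereal \<epsilon>)"

definition mean_equi_invariant ::
  "('u \<Rightarrow> 'a::metric_space \<Rightarrow> 'a) \<Rightarrow> 'u set \<Rightarrow> 'a set \<Rightarrow> bool" where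
  "mean_equi_invariant F U Q \<longleftrightarrow> (\<forall>x\<in>Q. mean_equi_invariant_point F U Q x)"

definition fin_equi_invariant_mean_point ::
  "('u \<Rightarrow> 'a::metric_space \<Rightarrow> 'a) \<Rightarrow> 'u set \<Rightarrow> 'a set \<Rightarrow> 'a \<Rightarrow> bool" where
  "fin_equi_invariant_mean_point F U Q x \<longleftrightarrow> x \<in> Q \<and>
     (\<forall>\<epsilon>>0. \<exists>\<delta>>0. \<exists>S. finite S \<and> S \<subseteq> ctrl_seqs U \<and>
        (\<forall>y\<in>ball x \<delta> \<inter> Q. \<exists>\<omega>\<in>S. \<forall>n\<ge>1. avg_dist F Q y \<omega> n < \<epsilon>))"

definition fin_equi_invariant_mean ::
  "('u \<Rightarrow> 'a::metric_space \<Rightarrow> 'a) \<Rightarrow> 'u set \<Rightarrow> 'a set \<Rightarrow> bool" where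
  "fin_equi_invariant_mean F U Q \<longleftrightarrow> (\<forall>x\<in>Q. fin_equi_invariant_mean_point F U Q x)"

text \<open>The example maps on X = [0,1] (values outside [0,1] are irrelevant:
  trajectories from Q stay in [0,1]).\<close>
definition F0 :: "real \<Rightarrow> real" where
  "F0 x = (if x < 1/4 then 1/2 else if x < 1/2 then 2 * (x - 1/2) + 1 else 1)"

definition F1 :: "real \<Rightarrow> real" where
  "F1 x = (if x < 1/4 then 12 * (x - 1/4)^2 + 1/4 else (x - 1/4)^2 + 1/4)"

definition Fex :: "nat \<Rightarrow> real \<Rightarrow> real" where
  "Fex u = (if u = 0 then F0 else F1)"

end

theory Submission
  imports Defs
begin

lemma infdist_Q_ge:
  assumes "(y::real) \<ge> 1/4"
  shows "infdist y {0..1/4} = y - 1/4"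
proof (rule antisym)
  show "infdist y {0..1/4} \<le> y - 1/4"
    using assms by (intro infdist_le2[of "1/4"]) (auto simp: dist_real_def)
  show "y - 1/4 \<le> infdist y {0..1/4}"
    unfolding infdist_def using assms
    by (auto intro!: cINF_greatest simp: dist_real_def)
qed

lemma traj1:
  assumes "0 \<le> y" "y \<le> 1/4"
  shows "1/4 \<le> phi Fex (Suc i) y (\<lambda>_. 1) \<and> phi Fex (Suc i) y (\<lambda>_. 1) - 1/4 \<le> (3/4)^(Suc i)"
proof (induction i)
  case 0
  have "(y - 1/4)^2 \<le> (1/4)^2"
    using assms by (intro power2_le_iff_abs_le[THEN iffD2]) auto
  then have "12 * (y - 1/4)^2 + 1/4 \<le> (1::real)" by (simp add: power2_eq_square)
  moreover have "(y - 1/4)^2 + 1/4 \<le> (1::real)" using \<open>(y - 1/4)^2 \<le> (1/4)^2\<close> by (simp add: power2_eq_square)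
  ultimately show ?case using assms by (auto simp: Fex_def F1_def)
next
  case (Suc i)
  define p where "p = phi Fex (Suc i) y (\<lambda>_. 1)"
  have h: "1/4 \<le> p" "p - 1/4 \<le> (3/4)^(Suc i)" using Suc by (auto simp: p_def)
  have "(3/4::real)^(Suc i) \<le> 3/4" 
    using power_le_one[of "3/4::real" i] by simp
  hence d: "p - 1/4 \<le> 3/4" using h by linarith
  have "(p - 1/4)^2 \<le> (p - 1/4) * (3/4)"
    unfolding power2_eq_square using h(1) d by (intro mult_left_mono) auto
  also have "\<dots> \<le> (3/4)^(Suc i) * (3/4)" using h by (intro mult_right_mono) auto
  finally have "(p - 1/4)^2 \<le> (3/4)^(Suc (Suc i))" by simp
  moreover have "phi Fex (Suc (Suc i)) y (\<lambda>_. 1) = (p - 1/4)^2 + 1/4"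
    using h(1) by (simp add: p_def Fex_def F1_def)
  ultimately show ?case by simp
qed

lemma dist_bound:
  assumes "0 \<le> y" "y \<le> 1/4"
  shows "infdist (phi Fex i y (\<lambda>_. 1)) {0..1/4} \<le> (3/4)^i"
proof (cases i)
  case 0 then show ?thesis using assms by simp
next
  case (Suc j)
  then show ?thesis using traj1[OF assms, of j] infdist_Q_ge by auto
qed

lemma avg_lim:
  assumes "0 \<le> y" "y \<le> 1/4"
  shows "(\<lambda>n. avg_dist Fex {0..1/4} y (\<lambda>_. 1) n) \<longlonglongrightarrow> 0"
proof (rule tendsto_sandwich[of "\<lambda>_. 0" _ _ "\<lambda>n. 4 / real n"])
  show "\<forall>\<^sub>F n in sequentially. 0 \<le> avg_dist Fex {0..1/4} y (\<lambda>_. 1) n"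
    by (intro always_eventually allI, unfold avg_dist_def,
        intro divide_nonneg_nonneg sum_nonneg infdist_nonneg) auto
  have "avg_dist Fex {0..1/4} y (\<lambda>_. 1) n \<le> 4 / real n" for n
  proof -
    have "(\<Sum>i<n. infdist (phi Fex i y (\<lambda>_. 1)) {0..1/4}) \<le> (\<Sum>i<n. (3/4::real)^i)"
      by (intro sum_mono dist_bound[OF assms])
    also have "\<dots> \<le> 4"
    proof -
      have "(\<Sum>i<n. (3/4::real)^i) = (1 - (3/4)^n) / (1 - 3/4)"
        using geometric_sum[of "3/4::real" n] by (simp add: lessThan_atLeast0)
      also have "\<dots> \<le> 4" by simp
      finally show ?thesis .
    qed
    finally show ?thesis unfolding avg_dist_def
      by (intro divide_right_mono) auto
  qed
  then show "\<forall>\<^sub>F n in sequentially. avg_dist Fex {0..1/4} y (\<lambda>_. 1) n \<le> 4 / real n"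
    by simp
  show "(\<lambda>n. 4 / real n) \<longlonglongrightarrow> 0" by (rule lim_const_over_n)
qed simp

theorem mainTheorem16:
  shows "mean_equi_invariant Fex {0, 1} {0..1/4}
         \<and> \<not> fin_equi_invariant_mean Fex {0, 1} {0..1/4}"
proof
  show "mean_equi_invariant Fex {0, 1} {0..1/4}"
    unfolding mean_equi_invariant_def mean_equi_invariant_point_def
  proof (intro ballI)
    fix x :: real
    assume xQ: "x \<in> {0..1/4}"
    show "x \<in> {0..1/4} \<and> (\<forall>\<epsilon>>0. \<exists>\<delta>>0. \<exists>\<omega>\<in>ctrl_seqs {0, 1}. \<forall>y\<in>ball x \<delta> \<inter> {0..1/4}.
        limsup (\<lambda>n. ereal (avg_dist Fex {0..1/4} y \<omega> n)) < ereal \<epsilon>)"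
    proof (intro conjI xQ allI impI)
    fix e :: real assume "e > 0"
    have "\<forall>y\<in>ball x 1 \<inter> {0..1/4}.
        limsup (\<lambda>n. ereal (avg_dist Fex {0..1/4} y (\<lambda>_. 1) n)) < ereal e"
    proof
      fix y assume "y \<in> ball x 1 \<inter> {0..(1/4::real)}"
      hence y: "0 \<le> y" "y \<le> 1/4" by auto
      have "limsup (\<lambda>n. ereal (avg_dist Fex {0..1/4} y (\<lambda>_. 1) n)) = ereal 0"
        apply (rule lim_imp_Limsup)
         apply simp
        apply (rule tendsto_ereal)
        using avg_lim[OF y] by simp
      then show "limsup (\<lambda>n. ereal (avg_dist Fex {0..1/4} y (\<lambda>_. 1) n)) < ereal e"
        using \<open>e > 0\<close> by simp
    qed
    moreover have "(\<lambda>_. 1::nat) \<in> ctrl_seqs {0,1}" by (simp add: ctrl_seqs_def)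
    ultimately show "\<exists>\<delta>>0. \<exists>\<omega>\<in>ctrl_seqs {0, 1}. \<forall>y\<in>ball x \<delta> \<inter> {0..1/4}.
        limsup (\<lambda>n. ereal (avg_dist Fex {0..1/4} y \<omega> n)) < ereal e"
      by (intro exI[of _ 1]) auto
    qed
  qed
  show "\<not> fin_equi_invariant_mean Fex {0, 1} {0..1/4}"
  proof
    assume "fin_equi_invariant_mean Fex {0, 1} {0..1/4}"
    hence "fin_equi_invariant_mean_point Fex {0, 1} {0..1/4} 0"
      unfolding fin_equi_invariant_mean_def by simp
    then obtain d S where d: "d > 0" and S: "S \<subseteq> ctrl_seqs {0,1}"
      and H: "\<forall>y\<in>ball 0 d \<inter> {0..1/4}. \<exists>\<omega>\<in>S. \<forall>n\<ge>1. avg_dist Fex {0..1/4} y \<omega> n < 1/8"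
      unfolding fin_equi_invariant_mean_point_def
      by (elim conjE allE[of _ "1/8"]) auto
    have "(0::real) \<in> ball 0 d \<inter> {0..1/4}" using d by auto
    obtain w where w: "w \<in> S" and A: "avg_dist Fex {0..1/4} 0 w 2 < 1/8"
    proof -
      obtain w where "w \<in> S" "\<forall>n\<ge>1. avg_dist Fex {0..1/4} 0 w n < 1/8"
        using H \<open>(0::real) \<in> ball 0 d \<inter> {0..1/4}\<close> by blast
      then show ?thesis using that[of w] by simp
    qed
    have "w 0 \<in> {0,1}" using w S by (auto simp: ctrl_seqs_def)
    then consider "w 0 = 0" | "w 0 = 1" by auto
    then show False
    proof cases
      case 1
      have "phi Fex 1 0 w = 1/2" using 1 by (simp add: Fex_def F0_def)
      then have "infdist (phi Fex 1 0 w) {0..1/4} = 1/4" by (subst \<open>phi Fex 1 0 w = 1/2\<close>) (simp add: infdist_Q_ge)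
      then have "avg_dist Fex {0..1/4} 0 w 2 = 1/8"
        by (simp add: avg_dist_def numeral_2_eq_2)
      then show False using A by simp
    next
      case 2
      have "phi Fex 1 0 w = 1" using 2 by (simp add: Fex_def F1_def power2_eq_square)
      then have "infdist (phi Fex 1 0 w) {0..1/4} = 3/4" by (subst \<open>phi Fex 1 0 w = 1\<close>) (simp add: infdist_Q_ge)
      then have "avg_dist Fex {0..1/4} 0 w 2 = 3/8"
        by (simp add: avg_dist_def numeral_2_eq_2)
      then show False using A by simp
    qed
  qed
qed

end
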